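(* Let $d>K\ge1$, $\mathbf Q\in\mathrm{St}(d,K)$, $\lambda_1>\dots>\lambda_K>0$, $\boldsymbol\Theta=\mathrm{diag}(\sqrt{\lambda_1},\dots,\sqrt{\lambda_K})$, $a_1>\dots>a_K>0$, and let $g,d_F,\mathcal A_\alpha,\rho_\alpha,\mathcal P_{\mathrm{St}}$ be as in the context. For every $\alpha>0$ there exist constants $\beta_3>0$ and $\beta_4>0$ such that for every $\mathbf X^0\in\mathrm{St}(d,K)$ and every sequence generated by $\mathbf X^{t+1}\in\mathcal P_{\mathrm{St}}(\mathcal A_\alpha(\mathbf X^t))$, the following hold for all $t\ge0$: (a) $g(\mathbf X^{t+1})-g(\mathbf X^t)\ge\alpha\|\mathbf X^t-\mathbf X^{t+1}\|_F^2$; (b) $g(\mathbf Q)-g(\mathbf X^t)\le\beta_3\,d_F^2(\mathbf X^t,\mathbf Q)$; (c) $\rho_\alpha(\mathbf X^t)\le\beta_4\|\mathbf X^{t+1}-\mathbf X^t\|_F$.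
   Context: $\mathrm{St}(d,K)=\{\mathbf X\in\mathbb R^{d\times K}:\mathbf X^\top\mathbf X=\mathbf I_K\}$. $g(\mathbf X)=\mathrm{tr}(\mathbf X^\top\mathbf Q\boldsymbol\Theta^2\mathbf Q^\top\mathbf X\,\mathrm{diag}(a_1,\dots,a_K))$. $d_F(\mathbf X,\mathbf Q)=\min_{\mathbf q\in\{1,-1\}^K}\|\mathbf X-\mathbf Q\,\mathrm{diag}(\mathbf q)\|_F$. $\mathcal A_\alpha(\mathbf X)=\alpha\mathbf X+\mathbf Q\boldsymbol\Theta^2\mathbf Q^\top\mathbf X\,\mathrm{diag}(a_1,\dots,a_K)$. $\rho_\alpha(\mathbf X)=\|\mathbf X\mathbf V\boldsymbol\Sigma\mathbf V^\top-\mathcal A_\alpha(\mathbf X)\|_F$ where $\mathcal A_\alpha(\mathbf X)=\mathbf U\boldsymbol\Sigma\mathbf V^\top$ is a thin SVD (equivalently $\mathbf V\boldsymbol\Sigma\mathbf V^\top=(\mathcal A_\alpha(\mathbf X)^\top\mathcal A_\alpha(\mathbf X))^{1/2}$). $\mathcal P_{\mathrm{St}}(\mathbf Y)$ is the set of Frobenius-nearest points of $\mathrm{St}(d,K)$ to $\mathbf Y$. *)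

theory Defs
  imports Complex_Main "Jordan_Normal_Form.Matrix"
begin

(* Matrices are Jordan_Normal_Form matrices (real mat); indices start at 0. *)

definition trace_mat :: "real mat \<Rightarrow> real" where
  "trace_mat A = (\<Sum>i<dim_row A. A $$ (i, i))"

definition frob_norm :: "real mat \<Rightarrow> real" where
  "frob_norm A = sqrt (\<Sum>i<dim_row A. \<Sum>j<dim_col A. (A $$ (i, j))\<^sup>2)"

definition stiefel :: "nat \<Rightarrow> nat \<Rightarrow> real mat set" where
  "stiefel d K = {X. X \<in> carrier_mat d K \<and> transpose_mat X * X = 1\<^sub>m K}"

abbreviation diagm :: "nat \<Rightarrow> (nat \<Rightarrow> real) \<Rightarrow> real mat" where
  "diagm K v \<equiv> mat_diag K v"

text \<open>g(X) = tr(X^T Q Theta^2 Q^T X diag(a)), with Theta^2 = diag(lambda).\<close>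
definition gfun :: "nat \<Rightarrow> real mat \<Rightarrow> (nat \<Rightarrow> real) \<Rightarrow> (nat \<Rightarrow> real) \<Rightarrow> real mat \<Rightarrow> real" where
  "gfun K Q lam a X =
     trace_mat (transpose_mat X * Q * diagm K lam * transpose_mat Q * X * diagm K a)"

definition dF :: "nat \<Rightarrow> real mat \<Rightarrow> real mat \<Rightarrow> real" where
  "dF K X Q = Min ((\<lambda>q. frob_norm (X - Q * diagm K (\<lambda>i. q ! i)))
                   ` {q :: real list. length q = K \<and> set q \<subseteq> {1, -1}})"

definition A_alpha :: "nat \<Rightarrow> real mat \<Rightarrow> (nat \<Rightarrow> real) \<Rightarrow> (nat \<Rightarrow> real) \<Rightarrow> real \<Rightarrow> real mat \<Rightarrow> real mat" where
  "A_alpha K Q lam a \<alpha> X = \<alpha> \<cdot>\<^sub>m X + Q * diagm K lam * transpose_mat Q * X * diagm K a"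

definition psd_mat :: "nat \<Rightarrow> real mat \<Rightarrow> bool" where
  "psd_mat n B \<longleftrightarrow> B \<in> carrier_mat n n \<and> transpose_mat B = B \<and>
     (\<forall>v \<in> carrier_vec n. v \<bullet> (B *\<^sub>v v) \<ge> 0)"

definition psd_sqrt :: "nat \<Rightarrow> real mat \<Rightarrow> real mat" where
  "psd_sqrt n M = (THE B. psd_mat n B \<and> B * B = M)"

text \<open>rho_alpha(X) = || X V Sigma V^T - A_alpha(X) ||_F, V Sigma V^T = (A^T A)^(1/2).\<close>
definition rho_alpha :: "nat \<Rightarrow> real mat \<Rightarrow> (nat \<Rightarrow> real) \<Rightarrow> (nat \<Rightarrow> real) \<Rightarrow> real \<Rightarrow> real mat \<Rightarrow> real" where
  "rho_alpha K Q lam a \<alpha> X =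
     (let A = A_alpha K Q lam a \<alpha> X in
      frob_norm (X * psd_sqrt K (transpose_mat A * A) - A))"

definition P_St :: "nat \<Rightarrow> nat \<Rightarrow> real mat \<Rightarrow> real mat set" where
  "P_St d K Y = {Z \<in> stiefel d K. \<forall>W \<in> stiefel d K. frob_norm (Z - Y) \<le> frob_norm (W - Y)}"

end

theory Submission
  imports Defs
begin


lemma mult_entry:
  assumes "i < dim_row A" "j < dim_col B" "dim_col A = dim_row B"
  shows "(A * B) $$ (i, j) = (\<Sum>k<dim_row B. A $$ (i,k) * B $$ (k,j))"
  using assms by (simp add: index_mult_mat scalar_prod_def atLeast0LessThan row_def col_def)

lemma diag_dims[simp]: "dim_row (mat_diag n f) = n" "dim_col (mat_diag n f) = n"
  by (auto simp: mat_diag_def)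

lemma diag_entry[simp]: "i < n \<Longrightarrow> j < n \<Longrightarrow> mat_diag n f $$ (i,j) = (if i = j then f j else 0)"
  by (auto simp: mat_diag_def)

definition wq :: "nat \<Rightarrow> real mat \<Rightarrow> real mat \<Rightarrow> nat \<Rightarrow> nat \<Rightarrow> real" where
  "wq d Q X l k = (\<Sum>i<d. Q $$ (i,l) * X $$ (i,k))"

lemma NX_entry:
  assumes Q: "Q \<in> carrier_mat d K" and X: "X \<in> carrier_mat d K" and i: "i < d" and k: "k < K"
  shows "(Q * diagm K lam * transpose_mat Q * X * diagm K a) $$ (i,k)
     = a k * (\<Sum>l<K. Q $$ (i,l) * lam l * wq d Q X l k)"
proof -
  have dims[simp]: "dim_row Q = d" "dim_col Q = K" "dim_row X = d" "dim_col X = K"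
    using Q X by auto
  have "(Q * diagm K lam * transpose_mat Q * X * diagm K a) $$ (i,k)
     = (\<Sum>m<K. (Q * diagm K lam * transpose_mat Q * X) $$ (i,m) * (diagm K a) $$ (m,k))"
    using assms by (simp add: mult_entry del: index_mult_mat(1))
  also have "\<dots> = (Q * diagm K lam * transpose_mat Q * X) $$ (i,k) * a k"
    using k by (simp add: mat_diag_def if_distrib cong: if_cong)
  also have "(Q * diagm K lam * transpose_mat Q * X) $$ (i,k)
     = (\<Sum>j<d. (Q * diagm K lam * transpose_mat Q) $$ (i,j) * X $$ (j,k))"
    using assms by (simp add: mult_entry del: index_mult_mat(1))
  also have "\<dots> = (\<Sum>j<d. (\<Sum>l<K. (Q * diagm K lam) $$ (i,l) * Q $$ (j,l)) * X $$ (j,k))"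
    using assms by (simp add: mult_entry del: index_mult_mat(1))
  also have "\<dots> = (\<Sum>j<d. (\<Sum>l<K. Q $$ (i,l) * lam l * Q $$ (j,l)) * X $$ (j,k))"
    using assms by (simp add: mult_entry mat_diag_def if_distrib cong: if_cong del: index_mult_mat(1))
  also have "\<dots> = (\<Sum>l<K. Q $$ (i,l) * lam l * wq d Q X l k)"
    unfolding wq_def by (simp add: sum_distrib_left sum_distrib_right mult.assoc sum.swap[of _ "{..<d}"])
  finally show ?thesis by (simp add: mult.commute)
qed

lemma gfun_eq:
  assumes Q: "Q \<in> carrier_mat d K" and X: "X \<in> carrier_mat d K"
  shows "gfun K Q lam a X = (\<Sum>k<K. a k * (\<Sum>l<K. lam l * (wq d Q X l k)\<^sup>2))"
proof -
  have dims[simp]: "dim_row Q = d" "dim_col Q = K" "dim_row X = d" "dim_col X = K"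
    using Q X by auto
  have "(transpose_mat X * Q * diagm K lam * transpose_mat Q * X * diagm K a) $$ (k,k)
      = a k * (\<Sum>l<K. lam l * (wq d Q X l k)\<^sup>2)" if k: "k < K" for k
  proof -
    have "(transpose_mat X * Q * diagm K lam * transpose_mat Q * X * diagm K a) $$ (k,k)
     = (\<Sum>m<K. (transpose_mat X * Q * diagm K lam * transpose_mat Q * X) $$ (k,m) * (diagm K a) $$ (m,k))"
      using k by (simp add: mult_entry del: index_mult_mat(1))
    also have "\<dots> = (transpose_mat X * Q * diagm K lam * transpose_mat Q * X) $$ (k,k) * a k"
      using k by (simp add: if_distrib cong: if_cong del: index_mult_mat(1))
    also have "(transpose_mat X * Q * diagm K lam * transpose_mat Q * X) $$ (k,k)
       = (\<Sum>j<d. (\<Sum>l<K. (transpose_mat X * Q) $$ (k,l) * lam l * Q $$ (j,l)) * X $$ (j,k))"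
      using k by (simp add: mult_entry if_distrib cong: if_cong del: index_mult_mat(1))
    also have "\<dots> = (\<Sum>j<d. (\<Sum>l<K. wq d Q X l k * lam l * Q $$ (j,l)) * X $$ (j,k))"
      using k by (simp add: mult_entry wq_def mult.commute del: index_mult_mat(1))
    also have "\<dots> = (\<Sum>j<d. \<Sum>l<K. (wq d Q X l k * lam l) * (Q $$ (j,l) * X $$ (j,k)))"
      by (simp add: sum_distrib_right mult.assoc)
    also have "\<dots> = (\<Sum>l<K. \<Sum>j<d. (wq d Q X l k * lam l) * (Q $$ (j,l) * X $$ (j,k)))"
      by (rule sum.swap)
    also have "\<dots> = (\<Sum>l<K. (wq d Q X l k * lam l) * wq d Q X l k)"
      by (simp add: wq_def sum_distrib_left)
    also have "\<dots> = (\<Sum>l<K. lam l * (wq d Q X l k)\<^sup>2)"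
      by (simp add: power2_eq_square mult_ac)
    finally show ?thesis by (simp add: mult.commute)
  qed
  then show ?thesis unfolding gfun_def trace_mat_def by simp
qed

definition ip :: "nat \<Rightarrow> nat \<Rightarrow> real mat \<Rightarrow> real mat \<Rightarrow> real" where
  "ip d K Z W = (\<Sum>i<d. \<Sum>k<K. Z $$ (i,k) * W $$ (i,k))"

lemma ip_NX:
  assumes Q: "Q \<in> carrier_mat d K" and X: "X \<in> carrier_mat d K"
  shows "ip d K Z (Q * diagm K lam * transpose_mat Q * X * diagm K a)
     = (\<Sum>k<K. a k * (\<Sum>l<K. lam l * wq d Q Z l k * wq d Q X l k))"
proof -
  have "ip d K Z (Q * diagm K lam * transpose_mat Q * X * diagm K a)
     = (\<Sum>i<d. \<Sum>k<K. Z $$ (i,k) * (a k * (\<Sum>l<K. Q $$ (i,l) * lam l * wq d Q X l k)))"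
    unfolding ip_def by (intro sum.cong refl) (simp add: NX_entry[OF Q X])
  also have "\<dots> = (\<Sum>i<d. \<Sum>k<K. \<Sum>l<K. (a k * lam l * wq d Q X l k) * (Q $$ (i,l) * Z $$ (i,k)))"
    by (simp add: sum_distrib_left mult_ac)
  also have "\<dots> = (\<Sum>k<K. \<Sum>l<K. \<Sum>i<d. (a k * lam l * wq d Q X l k) * (Q $$ (i,l) * Z $$ (i,k)))"
    by (simp add: sum.swap[of _ "{..<d}"])
  also have "\<dots> = (\<Sum>k<K. \<Sum>l<K. (a k * lam l * wq d Q X l k) * wq d Q Z l k)"
    by (simp add: wq_def sum_distrib_left)
  also have "\<dots> = (\<Sum>k<K. a k * (\<Sum>l<K. lam l * wq d Q Z l k * wq d Q X l k))"
    by (simp add: sum_distrib_left mult_ac)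
  finally show ?thesis .
qed

lemma stiefel_gram:
  assumes "X \<in> stiefel d K" "k < K" "l < K"
  shows "(\<Sum>i<d. X $$ (i,k) * X $$ (i,l)) = (if k = l then 1 else 0)"
proof -
  have X: "X \<in> carrier_mat d K" and XX: "transpose_mat X * X = 1\<^sub>m K" using assms(1) by (auto simp: stiefel_def)
  have "(transpose_mat X * X) $$ (k,l) = (\<Sum>i<d. X $$ (i,k) * X $$ (i,l))"
    using X assms by (subst mult_entry) auto
  then show ?thesis using XX assms by simp
qed

lemma stiefel_carrier: "X \<in> stiefel d K \<Longrightarrow> X \<in> carrier_mat d K"
  by (simp add: stiefel_def)

lemma stiefelI:
  assumes X: "X \<in> carrier_mat d K"
    and G: "\<And>k l. k < K \<Longrightarrow> l < K \<Longrightarrow> (\<Sum>i<d. X $$ (i,k) * X $$ (i,l)) = (if k = l then 1 else 0)"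
  shows "X \<in> stiefel d K"
proof -
  have "transpose_mat X * X = 1\<^sub>m K"
  proof (rule eq_matI)
    fix k l assume kl: "k < dim_row (1\<^sub>m K)" "l < dim_col (1\<^sub>m K)"
    have "(transpose_mat X * X) $$ (k,l) = (\<Sum>i<d. X $$ (i,k) * X $$ (i,l))"
      using X kl by (subst mult_entry) auto
    then show "(transpose_mat X * X) $$ (k,l) = 1\<^sub>m K $$ (k,l)" using G kl by simp
  qed (use X in auto)
  then show ?thesis using X by (simp add: stiefel_def)
qed

lemma ip_self_stiefel: "X \<in> stiefel d K \<Longrightarrow> ip d K X X = real K"
proof -
  assume X: "X \<in> stiefel d K"
  have "ip d K X X = (\<Sum>k<K. \<Sum>i<d. X $$ (i,k) * X $$ (i,k))"
    unfolding ip_def by (rule sum.swap)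
  also have "\<dots> = (\<Sum>k<K. 1)" using stiefel_gram[OF X] by simp
  finally show ?thesis by simp
qed

lemma frob_nonneg: "0 \<le> frob_norm M"
  unfolding frob_norm_def by (intro real_sqrt_ge_zero sum_nonneg) auto

lemma frob_sq:
  assumes "M \<in> carrier_mat d K"
  shows "(frob_norm M)\<^sup>2 = ip d K M M"
proof -
  have "0 \<le> (\<Sum>i<dim_row M. \<Sum>j<dim_col M. (M $$ (i, j))\<^sup>2)" by (intro sum_nonneg) auto
  then show ?thesis using assms unfolding frob_norm_def ip_def by (simp add: power2_eq_square)
qed

lemma ip_diff_self:
  assumes "Z \<in> carrier_mat d K" "W \<in> carrier_mat d K"
  shows "ip d K (Z - W) (Z - W) = ip d K Z Z - 2 * ip d K Z W + ip d K W W"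
proof -
  have "ip d K (Z - W) (Z - W) = (\<Sum>i<d. \<Sum>k<K. Z $$ (i,k) * Z $$ (i,k) - 2 * (Z $$ (i,k) * W $$ (i,k)) + W $$ (i,k) * W $$ (i,k))"
    unfolding ip_def using assms by (intro sum.cong refl) (simp add: algebra_simps)
  also have "\<dots> = ip d K Z Z - 2 * ip d K Z W + ip d K W W"
    unfolding ip_def by (simp add: sum.distrib sum_subtractf sum_distrib_left)
  finally show ?thesis .
qed

lemma ip_comm: "ip d K Z W = ip d K W Z"
  unfolding ip_def by (simp add: mult.commute)

lemma P_St_opt:
  assumes Y: "Y \<in> P_St d K A" and A: "A \<in> carrier_mat d K" and W: "W \<in> stiefel d K"
  shows "ip d K W A \<le> ip d K Y A"
proof -
  have Yst: "Y \<in> stiefel d K" and le: "frob_norm (Y - A) \<le> frob_norm (W - A)"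
    using Y W unfolding P_St_def by auto
  have Yc: "Y \<in> carrier_mat d K" and Wc: "W \<in> carrier_mat d K"
    using Yst W by (auto simp: stiefel_def)
  have sq: "(frob_norm (Y - A))\<^sup>2 \<le> (frob_norm (W - A))\<^sup>2"
    using le by (intro power_mono) (auto simp: frob_nonneg)
  have c1: "Y - A \<in> carrier_mat d K" and c2: "W - A \<in> carrier_mat d K" using Yc Wc A by auto
  have "ip d K (Y - A) (Y - A) \<le> ip d K (W - A) (W - A)"
    using sq frob_sq[OF c1] frob_sq[OF c2] by simp
  then show ?thesis
    using Yc Wc A by (simp add: ip_diff_self ip_self_stiefel[OF Yst] ip_self_stiefel[OF W])
qed

lemma A_carrier:
  assumes "Q \<in> carrier_mat d K" "X \<in> carrier_mat d K"
  shows "A_alpha K Q lam a \<alpha> X \<in> carrier_mat d K"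
  using assms unfolding A_alpha_def by auto

lemma A_entry:
  assumes Q: "Q \<in> carrier_mat d K" and X: "X \<in> carrier_mat d K" and i: "i < d" and k: "k < K"
  shows "A_alpha K Q lam a \<alpha> X $$ (i,k) = \<alpha> * X $$ (i,k) + a k * (\<Sum>l<K. Q $$ (i,l) * lam l * wq d Q X l k)"
  using assms unfolding A_alpha_def by (simp add: NX_entry[OF Q X i k, symmetric] del: index_mult_mat(1))

lemma ip_A:
  assumes Q: "Q \<in> carrier_mat d K" and X: "X \<in> carrier_mat d K"
  shows "ip d K Z (A_alpha K Q lam a \<alpha> X) = \<alpha> * ip d K Z X + (\<Sum>k<K. a k * (\<Sum>l<K. lam l * wq d Q Z l k * wq d Q X l k))"
proof -
  have "ip d K Z (A_alpha K Q lam a \<alpha> X) = (\<Sum>i<d. \<Sum>k<K. \<alpha> * (Z $$ (i,k) * X $$ (i,k)) + Z $$ (i,k) * (Q * diagm K lam * transpose_mat Q * X * diagm K a) $$ (i,k))"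
    unfolding ip_def A_alpha_def using Q X by (intro sum.cong refl) (simp add: algebra_simps del: index_mult_mat(1))
  also have "\<dots> = \<alpha> * ip d K Z X + ip d K Z (Q * diagm K lam * transpose_mat Q * X * diagm K a)"
    unfolding ip_def by (simp add: sum.distrib sum_distrib_left)
  finally show ?thesis using ip_NX[OF Q X] by simp
qed

lemma part_a:
  assumes Q: "Q \<in> carrier_mat d K" and X: "X \<in> stiefel d K"
    and Y: "Y \<in> P_St d K (A_alpha K Q lam a \<alpha> X)"
    and lam: "\<And>l. l < K \<Longrightarrow> lam l \<ge> 0" and apos: "\<And>k. k < K \<Longrightarrow> a k \<ge> 0"
  shows "gfun K Q lam a Y - gfun K Q lam a X \<ge> \<alpha> * (frob_norm (X - Y))\<^sup>2"
proof -
  have Xc: "X \<in> carrier_mat d K" using X by (simp add: stiefel_def)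
  have Yst: "Y \<in> stiefel d K" using Y by (simp add: P_St_def)
  have Yc: "Y \<in> carrier_mat d K" using Yst by (simp add: stiefel_def)
  define wX where "wX = wq d Q X"
  define wY where "wY = wq d Q Y"
  define T where "T = (\<lambda>w. (\<Sum>k<K. a k * (\<Sum>l<K. lam l * w l k * wX l k)))"
  have opt: "ip d K X (A_alpha K Q lam a \<alpha> X) \<le> ip d K Y (A_alpha K Q lam a \<alpha> X)"
    by (rule P_St_opt[OF Y A_carrier[OF Q Xc] X])
  then have opt2: "\<alpha> * ip d K X X + T wX \<le> \<alpha> * ip d K Y X + T wY"
    unfolding ip_A[OF Q Xc] T_def wX_def wY_def .
  have gX: "gfun K Q lam a X = (\<Sum>k<K. a k * (\<Sum>l<K. lam l * (wX l k)\<^sup>2))"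
    using gfun_eq[OF Q Xc] wX_def by simp
  have gY: "gfun K Q lam a Y = (\<Sum>k<K. a k * (\<Sum>l<K. lam l * (wY l k)\<^sup>2))"
    using gfun_eq[OF Q Yc] wY_def by simp
  have key: "gfun K Q lam a Y - gfun K Q lam a X - 2 * T wY + 2 * T wX
      = (\<Sum>k<K. a k * (\<Sum>l<K. lam l * (wY l k - wX l k)\<^sup>2))"
    unfolding gX gY T_def
    by (simp add: sum_subtractf[symmetric] sum.distrib[symmetric] sum_distrib_left
         right_diff_distrib distrib_left power2_eq_square algebra_simps)
  have "0 \<le> (\<Sum>k<K. a k * (\<Sum>l<K. lam l * (wY l k - wX l k)\<^sup>2))"
    using lam apos by (intro sum_nonneg mult_nonneg_nonneg) auto
  have fr: "(frob_norm (X - Y))\<^sup>2 = 2 * real K - 2 * ip d K Y X"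
    using frob_sq[of "X - Y" d K] minus_carrier_mat[OF Yc] Xc Yc ip_diff_self[OF Xc Yc] ip_self_stiefel[OF X] ip_self_stiefel[OF Yst]
    by (simp add: ip_comm[of d K X Y])
  have fr2: "\<alpha> * (frob_norm (X - Y))\<^sup>2 = 2 * (\<alpha> * real K) - 2 * (\<alpha> * ip d K Y X)"
    unfolding fr by (simp add: algebra_simps)
  show ?thesis
    using key \<open>0 \<le> _\<close> opt2[unfolded ip_self_stiefel[OF X]] fr2 by linarith
qed

lemma gfun_Q:
  assumes Q: "Q \<in> stiefel d K"
  shows "gfun K Q lam a Q = (\<Sum>k<K. a k * lam k)"
proof -
  have Qc: "Q \<in> carrier_mat d K" using Q by (simp add: stiefel_def)
  have w: "(wq d Q Q l k)\<^sup>2 = (if l = k then 1 else 0)" if "k < K" "l < K" for k l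
    using stiefel_gram[OF Q that(2) that(1)] by (simp add: wq_def)
  have "gfun K Q lam a Q = (\<Sum>k<K. a k * (\<Sum>l<K. lam l * (if l = k then 1 else 0)))"
    unfolding gfun_eq[OF Qc Qc] using w by (auto intro!: sum.cong)
  also have "\<dots> = (\<Sum>k<K. a k * lam k)"
    by (intro sum.cong refl) (simp add: if_distrib cong: if_cong)
  finally show ?thesis .
qed

lemma part_b_single:
  assumes Q: "Q \<in> stiefel d K" and X: "X \<in> stiefel d K"
    and lam: "\<And>l. l < K \<Longrightarrow> lam l \<ge> 0" and apos: "\<And>k. k < K \<Longrightarrow> a k \<ge> 0"
    and s: "\<And>k. k < K \<Longrightarrow> (s k)\<^sup>2 = 1"
  shows "gfun K Q lam a Q - gfun K Q lam a X \<le> (\<Sum>k<K. a k * lam k) * (\<Sum>i<d. \<Sum>k<K. (X $$ (i,k) - Q $$ (i,k) * s k)\<^sup>2)"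
proof -
  have Qc: "Q \<in> carrier_mat d K" using Q by (simp add: stiefel_def)
  have Xc: "X \<in> carrier_mat d K" using X by (simp add: stiefel_def)
  define E where "E = (\<lambda>i k. X $$ (i,k) - Q $$ (i,k) * s k)"
  define e where "e = (\<lambda>k. \<Sum>i<d. (E i k)\<^sup>2)"
  have colk: "2 * s k * (\<Sum>i<d. Q $$ (i,k) * E i k) = - e k" if k: "k < K" for k
  proof -
    have "1 = (\<Sum>i<d. X $$ (i,k) * X $$ (i,k))" using stiefel_gram[OF X k k] by simp
    also have "\<dots> = (\<Sum>i<d. (s k)\<^sup>2 * (Q $$ (i,k) * Q $$ (i,k)) + 2 * s k * (Q $$ (i,k) * E i k) + (E i k)\<^sup>2)"
      unfolding E_def by (intro sum.cong refl) (simp add: algebra_simps power2_eq_square)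
    also have "\<dots> = (s k)\<^sup>2 * (\<Sum>i<d. Q $$ (i,k) * Q $$ (i,k)) + 2 * s k * (\<Sum>i<d. Q $$ (i,k) * E i k) + e k"
      unfolding e_def by (simp add: sum.distrib sum_distrib_left)
    also have "\<dots> = 1 + 2 * s k * (\<Sum>i<d. Q $$ (i,k) * E i k) + e k"
      using stiefel_gram[OF Q k k] s[OF k] by simp
    finally show ?thesis by simp
  qed
  have wkk: "wq d Q X k k = s k + (\<Sum>i<d. Q $$ (i,k) * E i k)" if k: "k < K" for k
  proof -
    have "wq d Q X k k = (\<Sum>i<d. s k * (Q $$ (i,k) * Q $$ (i,k)) + Q $$ (i,k) * E i k)"
      unfolding wq_def E_def by (intro sum.cong refl) (simp add: algebra_simps)
    also have "\<dots> = s k + (\<Sum>i<d. Q $$ (i,k) * E i k)"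
      using stiefel_gram[OF Q k k] by (simp add: sum.distrib sum_distrib_left[symmetric])
    finally show ?thesis .
  qed
  have termk: "a k * lam k * (1 - e k) \<le> a k * (\<Sum>l<K. lam l * (wq d Q X l k)\<^sup>2)" if k: "k < K" for k
  proof -
    have "lam k * (wq d Q X k k)\<^sup>2 \<le> (\<Sum>l<K. lam l * (wq d Q X l k)\<^sup>2)"
      using k lam by (intro member_le_sum) auto
    moreover have "1 - e k \<le> (wq d Q X k k)\<^sup>2"
    proof -
      have "(wq d Q X k k)\<^sup>2 = (s k)\<^sup>2 + 2 * s k * (\<Sum>i<d. Q $$ (i,k) * E i k) + (\<Sum>i<d. Q $$ (i,k) * E i k)\<^sup>2"
        unfolding wkk[OF k] by (simp add: power2_eq_square algebra_simps)
      then show ?thesis using colk[OF k] s[OF k] by (simp add: add_increasing2)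
    qed
    ultimately have "lam k * (1 - e k) \<le> (\<Sum>l<K. lam l * (wq d Q X l k)\<^sup>2)"
      using lam[OF k] by (meson mult_left_mono order_trans)
    then show ?thesis using apos[OF k] by (simp add: mult.assoc mult_left_mono)
  qed
  have "gfun K Q lam a Q - gfun K Q lam a X \<le> (\<Sum>k<K. a k * lam k) - (\<Sum>k<K. a k * lam k * (1 - e k))"
  proof -
    have "(\<Sum>k<K. a k * lam k * (1 - e k)) \<le> (\<Sum>k<K. a k * (\<Sum>l<K. lam l * (wq d Q X l k)\<^sup>2))"
      by (rule sum_mono) (use termk in auto)
    then show ?thesis unfolding gfun_Q[OF Q] gfun_eq[OF Qc Xc] by linarith
  qed
  also have "\<dots> = (\<Sum>k<K. (a k * lam k) * e k)"
    by (simp add: sum_subtractf[symmetric] algebra_simps)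
  also have "\<dots> \<le> (\<Sum>k<K. (\<Sum>k<K. a k * lam k) * e k)"
  proof (intro sum_mono mult_right_mono)
    fix k assume k: "k \<in> {..<K}"
    show "a k * lam k \<le> (\<Sum>k<K. a k * lam k)"
      using k lam apos by (intro member_le_sum) auto
    show "0 \<le> e k" unfolding e_def by (intro sum_nonneg) auto
  qed
  also have "\<dots> = (\<Sum>k<K. a k * lam k) * (\<Sum>i<d. \<Sum>k<K. (X $$ (i,k) - Q $$ (i,k) * s k)\<^sup>2)"
    unfolding e_def E_def by (simp add: sum_distrib_left sum.swap[of _ "{..<d}"])
  finally show ?thesis .
qed

lemma part_b:
  assumes Q: "Q \<in> stiefel d K" and X: "X \<in> stiefel d K"
    and lam: "\<And>l. l < K \<Longrightarrow> lam l \<ge> 0" and apos: "\<And>k. k < K \<Longrightarrow> a k \<ge> 0"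
  shows "gfun K Q lam a Q - gfun K Q lam a X \<le> (\<Sum>k<K. a k * lam k) * (dF K X Q)\<^sup>2"
proof -
  have Qc: "Q \<in> carrier_mat d K" using Q by (simp add: stiefel_def)
  have Xc: "X \<in> carrier_mat d K" using X by (simp add: stiefel_def)
  define S where "S = {q :: real list. length q = K \<and> set q \<subseteq> {1, -1}}"
  define f where "f = (\<lambda>q. frob_norm (X - Q * diagm K (\<lambda>i. q ! i)))"
  have finS: "finite S"
  proof -
    have "S = {q. set q \<subseteq> {1, -1} \<and> length q = K}" unfolding S_def by auto
    then show ?thesis using finite_lists_length_eq[of "{1, -1::real}" K] by simp
  qed
  have "replicate K 1 \<in> S" unfolding S_def by auto
  then have neS: "S \<noteq> {}" by auto
  have "Min (f ` S) \<in> f ` S" using finS neS by (intro Min_in) auto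
  then obtain q where q: "q \<in> S" and dFq: "dF K X Q = f q"
    unfolding dF_def f_def S_def by auto
  have s: "(q ! k)\<^sup>2 = 1" if "k < K" for k
  proof -
    have "q ! k \<in> set q" using q that unfolding S_def by auto
    then have "q ! k \<in> {1, -1}" using q unfolding S_def by auto
    then show ?thesis by auto
  qed
  define P where "P = Q * diagm K (\<lambda>i. q ! i)"
  have Pc: "P \<in> carrier_mat d K" unfolding P_def using Qc by auto
  have Pe: "P $$ (i,k) = Q $$ (i,k) * q ! k" if "i < d" "k < K" for i k
  proof -
    have "P $$ (i,k) = (\<Sum>m<K. Q $$ (i,m) * (diagm K (\<lambda>i. q ! i)) $$ (m,k))"
      unfolding P_def using that Qc by (subst mult_entry) auto
    also have "\<dots> = Q $$ (i,k) * q ! k" using that by (simp add: if_distrib cong: if_cong)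
    finally show ?thesis .
  qed
  have "(dF K X Q)\<^sup>2 = ip d K (X - P) (X - P)"
    unfolding dFq f_def P_def[symmetric] using Xc Pc by (intro frob_sq) auto
  also have "\<dots> = (\<Sum>i<d. \<Sum>k<K. (X $$ (i,k) - Q $$ (i,k) * q ! k)\<^sup>2)"
    unfolding ip_def using Xc Pc Pe by (intro sum.cong refl) (simp add: power2_eq_square)
  finally have dF2: "(dF K X Q)\<^sup>2 = (\<Sum>i<d. \<Sum>k<K. (X $$ (i,k) - Q $$ (i,k) * q ! k)\<^sup>2)" .
  show ?thesis unfolding dF2 by (rule part_b_single[OF Q X lam apos s]) auto
qed



lemma cs_sum:
  fixes f g :: "'a \<Rightarrow> real"
  shows "(\<Sum>i\<in>I. f i * g i)\<^sup>2 \<le> (\<Sum>i\<in>I. (f i)\<^sup>2) * (\<Sum>i\<in>I. (g i)\<^sup>2)"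
proof (cases "(\<Sum>i\<in>I. (g i)\<^sup>2) > 0")
  case False
  then have "(\<Sum>i\<in>I. (g i)\<^sup>2) = 0" using sum_nonneg[of I "\<lambda>i. (g i)\<^sup>2"] by auto
  then have "\<forall>i\<in>I. g i = 0 \<or> infinite I"
    using sum_nonneg_eq_0_iff[of I "\<lambda>i. (g i)\<^sup>2"] by auto
  then have "(\<Sum>i\<in>I. f i * g i) = 0" by (cases "finite I") auto
  then show ?thesis by (simp add: sum_nonneg mult_nonneg_nonneg)
next
  case True
  define r where "r = (\<Sum>i\<in>I. f i * g i) / (\<Sum>i\<in>I. (g i)\<^sup>2)"
  have "0 \<le> (\<Sum>i\<in>I. (f i - r * g i)\<^sup>2)" by (simp add: sum_nonneg)
  also have "\<dots> = (\<Sum>i\<in>I. (f i)\<^sup>2) - 2 * r * (\<Sum>i\<in>I. f i * g i) + r\<^sup>2 * (\<Sum>i\<in>I. (g i)\<^sup>2)"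
    by (simp add: algebra_simps power2_eq_square sum_distrib_left sum.distrib sum_subtractf)
  also have "\<dots> = (\<Sum>i\<in>I. (f i)\<^sup>2) - (\<Sum>i\<in>I. f i * g i)\<^sup>2 / (\<Sum>i\<in>I. (g i)\<^sup>2)"
    using True by (simp add: r_def power2_eq_square field_simps)
  finally show ?thesis using True by (simp add: field_simps)
qed

lemma frob_sq_gen: "(frob_norm M)\<^sup>2 = (\<Sum>i<dim_row M. \<Sum>j<dim_col M. (M $$ (i, j))\<^sup>2)"
  unfolding frob_norm_def by (simp add: sum_nonneg)


lemma frob_mult:
  assumes "dim_col M = dim_row N"
  shows "frob_norm (M * N) \<le> frob_norm M * frob_norm N"
proof -
  let ?n = "dim_row M" and ?m = "dim_row N" and ?p = "dim_col N"
  have "(frob_norm (M * N))\<^sup>2 = (\<Sum>i<?n. \<Sum>j<?p. (\<Sum>k<?m. M $$ (i,k) * N $$ (k,j))\<^sup>2)"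
    unfolding frob_sq_gen using assms by (intro sum.cong refl) (simp_all add: mult_entry del: index_mult_mat(1))
  also have "\<dots> \<le> (\<Sum>i<?n. \<Sum>j<?p. (\<Sum>k<?m. (M $$ (i,k))\<^sup>2) * (\<Sum>k<?m. (N $$ (k,j))\<^sup>2))"
    by (intro sum_mono cs_sum)
  also have "\<dots> = (\<Sum>i<?n. \<Sum>k<?m. (M $$ (i,k))\<^sup>2) * (\<Sum>j<?p. \<Sum>k<?m. (N $$ (k,j))\<^sup>2)"
    by (simp add: sum_product)
  also have "\<dots> = (frob_norm M)\<^sup>2 * (frob_norm N)\<^sup>2"
    unfolding frob_sq_gen using assms by (simp add: sum.swap[of _ "{..<?p}"])
  finally have "(frob_norm (M * N))\<^sup>2 \<le> (frob_norm M * frob_norm N)\<^sup>2" by (simp add: power_mult_distrib)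
  moreover have "0 \<le> frob_norm M * frob_norm N" unfolding frob_norm_def by (intro mult_nonneg_nonneg real_sqrt_ge_zero sum_nonneg) auto
  ultimately show ?thesis using power2_le_imp_le by blast
qed

lemma psd_kernel:
  fixes B :: "nat \<Rightarrow> nat \<Rightarrow> real"
  assumes sym: "\<And>i j. i < n \<Longrightarrow> j < n \<Longrightarrow> B i j = B j i"
    and psd: "\<And>v. 0 \<le> (\<Sum>i<n. v i * (\<Sum>j<n. B i j * v j))"
    and z: "(\<Sum>i<n. v i * (\<Sum>j<n. B i j * v j)) = 0"
    and i: "i < n"
  shows "(\<Sum>j<n. B i j * v j) = 0"
proof -
  define w where "w = (\<lambda>i. \<Sum>j<n. B i j * v j)"
  define u where "u = (\<lambda>i. \<Sum>j<n. B i j * w j)"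
  define nw where "nw = (\<Sum>i<n. (w i)\<^sup>2)"
  define qw where "qw = (\<Sum>i<n. w i * u i)"
  have qw0: "0 \<le> qw" unfolding qw_def u_def using psd[of w] .
  have cross: "(\<Sum>i<n. v i * u i) = nw"
  proof -
    have "(\<Sum>i<n. v i * u i) = (\<Sum>i<n. \<Sum>j<n. w j * (B j i * v i))"
      unfolding u_def by (intro sum.cong refl) (auto simp: sum_distrib_left sym mult_ac)
    also have "\<dots> = (\<Sum>j<n. w j * w j)"
      by (subst sum.swap) (simp add: w_def sum_distrib_left)
    finally show ?thesis by (simp add: nw_def power2_eq_square)
  qed
  have exp: "0 \<le> - 2 * t * nw + t\<^sup>2 * qw" for t
  proof -
    have "(\<Sum>i<n. (v i - t * w i) * (\<Sum>j<n. B i j * (v j - t * w j)))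
        = (\<Sum>i<n. (v i - t * w i) * (w i - t * u i))"
      unfolding w_def u_def by (simp add: algebra_simps sum_subtractf sum_distrib_left)
    also have "\<dots> = (\<Sum>i<n. v i * w i) - t * (\<Sum>i<n. v i * u i) - t * (\<Sum>i<n. w i * w i) + t\<^sup>2 * qw"
      unfolding qw_def by (simp add: algebra_simps sum_subtractf sum.distrib sum_distrib_left power2_eq_square)
    also have "\<dots> = - 2 * t * nw + t\<^sup>2 * qw"
      using z cross unfolding w_def nw_def by (simp add: power2_eq_square algebra_simps)
    finally show ?thesis using psd[of "\<lambda>i. v i - t * w i"] by simp
  qed
  have "nw = 0"
  proof (rule ccontr)
    assume "nw \<noteq> 0"
    moreover have "0 \<le> nw" unfolding nw_def by (intro sum_nonneg) auto
    ultimately have np: "0 < nw" by simp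
    define t where "t = nw / (qw + 1)"
    have tp: "0 < t" unfolding t_def using np qw0 by simp
    have "t * qw < nw" unfolding t_def using np qw0 by (simp add: field_simps)
    then have "t * (t * qw) < t * nw" using tp by simp
    then have "- 2 * t * nw + t\<^sup>2 * qw < 0" using tp np by (simp add: power2_eq_square algebra_simps)
    then show False using exp[of t] by simp
  qed
  then have "\<forall>i\<in>{..<n}. (w i)\<^sup>2 = 0" unfolding nw_def by (subst sum_nonneg_eq_0_iff[symmetric]) auto
  then show ?thesis using i unfolding w_def by simp
qed

lemma sqrt_unique_entry:
  fixes B C :: "nat \<Rightarrow> nat \<Rightarrow> real"
  assumes symB: "\<And>i j. i < n \<Longrightarrow> j < n \<Longrightarrow> B i j = B j i"
    and symC: "\<And>i j. i < n \<Longrightarrow> j < n \<Longrightarrow> C i j = C j i"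
    and psdB: "\<And>v. 0 \<le> (\<Sum>i<n. v i * (\<Sum>j<n. B i j * v j))"
    and psdC: "\<And>v. 0 \<le> (\<Sum>i<n. v i * (\<Sum>j<n. C i j * v j))"
    and sq: "\<And>i j. i < n \<Longrightarrow> j < n \<Longrightarrow> (\<Sum>k<n. B i k * B k j) = (\<Sum>k<n. C i k * C k j)"
    and ij: "i < n" "j < n"
  shows "B i j = C i j"
proof -
  define D where "D = (\<lambda>i j. B i j - C i j)"
  define BD where "BD = (\<lambda>k j. \<Sum>l<n. B k l * D l j)"
  define CD where "CD = (\<lambda>k j. \<Sum>l<n. C k l * D l j)"
  have symD: "D i j = D j i" if "i < n" "j < n" for i j unfolding D_def using symB symC that by simp
  have rel: "BD k j = - CD j k" if kj: "k < n" "j < n" for k j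
  proof -
    have "BD k j = (\<Sum>l<n. B k l * B l j) - (\<Sum>l<n. B k l * C l j)"
      unfolding BD_def D_def by (simp add: algebra_simps sum_subtractf)
    moreover have "CD j k = (\<Sum>l<n. C j l * B l k) - (\<Sum>l<n. C j l * C l k)"
      unfolding CD_def D_def by (simp add: algebra_simps sum_subtractf)
    moreover have "(\<Sum>l<n. C j l * B l k) = (\<Sum>l<n. B k l * C l j)"
      using symB symC kj by (intro sum.cong refl) (simp add: mult.commute)
    moreover have "(\<Sum>l<n. C j l * C l k) = (\<Sum>l<n. C k l * C l j)"
      using symC kj by (intro sum.cong refl) (simp add: mult.commute)
    ultimately show ?thesis using sq[OF kj] by simp
  qed
  define tB where "tB = (\<Sum>j<n. \<Sum>k<n. D k j * BD k j)"
  define tC where "tC = (\<Sum>j<n. \<Sum>k<n. D k j * CD k j)"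
  have qB: "0 \<le> (\<Sum>k<n. D k j * BD k j)" for j unfolding BD_def using psdB[of "\<lambda>k. D k j"] .
  have qC: "0 \<le> (\<Sum>k<n. D k j * CD k j)" for j unfolding CD_def using psdC[of "\<lambda>k. D k j"] .
  have "tB = - (\<Sum>j<n. \<Sum>k<n. D j k * CD j k)"
    unfolding tB_def using rel symD by (simp add: sum_negf[symmetric])
  also have "(\<Sum>j<n. \<Sum>k<n. D j k * CD j k) = tC"
    unfolding tC_def by (rule sum.swap)
  finally have "tB + tC = 0" by simp
  moreover have "0 \<le> tB" "0 \<le> tC" unfolding tB_def tC_def using qB qC by (auto intro: sum_nonneg)
  ultimately have "tB = 0" "tC = 0" by auto
  then have zB: "(\<Sum>k<n. D k j * BD k j) = 0" and zC: "(\<Sum>k<n. D k j * CD k j) = 0" if "j < n" for j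
  proof -
    have "\<forall>j\<in>{..<n}. (\<Sum>k<n. D k j * BD k j) = 0"
      using \<open>tB = 0\<close> unfolding tB_def by (subst sum_nonneg_eq_0_iff[symmetric]) (use qB in auto)
    moreover have "\<forall>j\<in>{..<n}. (\<Sum>k<n. D k j * CD k j) = 0"
      using \<open>tC = 0\<close> unfolding tC_def by (subst sum_nonneg_eq_0_iff[symmetric]) (use qC in auto)
    ultimately show "(\<Sum>k<n. D k j * BD k j) = 0" "(\<Sum>k<n. D k j * CD k j) = 0" using that by auto
  qed
  have BD0: "BD k j = 0" if "k < n" "j < n" for k j
    unfolding BD_def using psd_kernel[OF symB psdB zB[OF that(2), unfolded BD_def] that(1)] .
  have CD0: "CD k j = 0" if "k < n" "j < n" for k j
    unfolding CD_def using psd_kernel[OF symC psdC zC[OF that(2), unfolded CD_def] that(1)] .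
  have "(\<Sum>k<n. (D i k)\<^sup>2) = BD i i - CD i i"
  proof -
    have "(\<Sum>k<n. (D i k)\<^sup>2) = (\<Sum>k<n. (B i k - C i k) * D k i)"
      using symD ij by (intro sum.cong refl) (simp add: D_def power2_eq_square)
    then show ?thesis unfolding BD_def CD_def by (simp add: algebra_simps sum_subtractf)
  qed
  then have "(\<Sum>k<n. (D i k)\<^sup>2) = 0" using BD0 CD0 ij by simp
  then have "(D i j)\<^sup>2 = 0" using sum_nonneg_eq_0_iff[of "{..<n}" "\<lambda>k. (D i k)\<^sup>2"] ij by auto
  then show ?thesis unfolding D_def by simp
qed

lemma psd_mat_entry:
  assumes "psd_mat n B"
  shows "B \<in> carrier_mat n n"
    and "\<And>i j. i < n \<Longrightarrow> j < n \<Longrightarrow> B $$ (i,j) = B $$ (j,i)"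
    and "\<And>f. 0 \<le> (\<Sum>i<n. f i * (\<Sum>j<n. B $$ (i,j) * f j))"
proof -
  show Bc: "B \<in> carrier_mat n n" using assms by (simp add: psd_mat_def)
  have T: "transpose_mat B = B" using assms by (simp add: psd_mat_def)
  show "B $$ (i,j) = B $$ (j,i)" if "i < n" "j < n" for i j
  proof -
    have "transpose_mat B $$ (j,i) = B $$ (i,j)" using Bc that by simp
    then show ?thesis using T by simp
  qed
  show "0 \<le> (\<Sum>i<n. f i * (\<Sum>j<n. B $$ (i,j) * f j))" for f
  proof -
    have "0 \<le> vec n f \<bullet> (B *\<^sub>v vec n f)" using assms by (simp add: psd_mat_def)
    also have "vec n f \<bullet> (B *\<^sub>v vec n f) = (\<Sum>i<n. f i * (\<Sum>j<n. B $$ (i,j) * f j))"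
      using Bc by (simp add: scalar_prod_def mult_mat_vec_def atLeast0LessThan row_def)
    finally show ?thesis .
  qed
qed

lemma psd_mat_intro:
  assumes Bc: "B \<in> carrier_mat n n"
    and sym: "\<And>i j. i < n \<Longrightarrow> j < n \<Longrightarrow> B $$ (i,j) = B $$ (j,i)"
    and psd: "\<And>f. 0 \<le> (\<Sum>i<n. f i * (\<Sum>j<n. B $$ (i,j) * f j))"
  shows "psd_mat n B"
proof -
  have "transpose_mat B = B" using Bc sym by (intro eq_matI) auto
  moreover have "0 \<le> v \<bullet> (B *\<^sub>v v)" if v: "v \<in> carrier_vec n" for v
  proof -
    have "v \<bullet> (B *\<^sub>v v) = (\<Sum>i<n. v $ i * (\<Sum>j<n. B $$ (i,j) * v $ j))"
      using Bc v by (simp add: scalar_prod_def mult_mat_vec_def atLeast0LessThan row_def mult.commute)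
    then show ?thesis using psd[of "\<lambda>i. v $ i"] by simp
  qed
  ultimately show ?thesis using Bc by (simp add: psd_mat_def)
qed

lemma psd_sqrt_eq:
  assumes H: "psd_mat n H" and HH: "H * H = M"
  shows "psd_sqrt n M = H"
  unfolding psd_sqrt_def
proof (rule the_equality)
  show "psd_mat n H \<and> H * H = M" using H HH by simp
  fix B assume B: "psd_mat n B \<and> B * B = M"
  have Bc: "B \<in> carrier_mat n n" and Hc: "H \<in> carrier_mat n n"
    using B H psd_mat_entry(1) by auto
  show "B = H"
  proof (rule eq_matI)
    fix i j assume ij: "i < dim_row H" "j < dim_col H"
    then have ij': "i < n" "j < n" using Hc by auto
    have sq: "(\<Sum>k<n. B $$ (i,k) * B $$ (k,j)) = (\<Sum>k<n. H $$ (i,k) * H $$ (k,j))"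
      if "i < n" "j < n" for i j
    proof -
      have "(B * B) $$ (i,j) = (H * H) $$ (i,j)" using B HH by simp
      then show ?thesis using Bc Hc that by (simp add: mult_entry del: index_mult_mat(1))
    qed
    show "B $$ (i,j) = H $$ (i,j)"
      by (rule sqrt_unique_entry[of n "\<lambda>i j. B $$ (i,j)" "\<lambda>i j. H $$ (i,j)", OF _ _ _ _ sq ij'])
        (use psd_mat_entry[of n B] psd_mat_entry[of n H] B H in auto)
  qed (use Bc Hc in auto)
qed



lemma angle_zero:
  fixes x y :: real
  assumes H: "\<And>c s. c\<^sup>2 + s\<^sup>2 = 1 \<Longrightarrow> (c - 1) * x + s * y \<le> 0"
  shows "y = 0"
proof (rule ccontr)
  assume y: "y \<noteq> 0"
  have main: "- (t\<^sup>2 * x) + t * y \<le> 0" for t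
  proof -
    define c where "c = (1 - t\<^sup>2) / (1 + t\<^sup>2)"
    define s where "s = 2 * t / (1 + t\<^sup>2)"
    have p: "0 < 1 + t\<^sup>2" by (simp add: add_pos_nonneg)
    have e: "(1 - t\<^sup>2)\<^sup>2 + (2 * t)\<^sup>2 = (1 + t\<^sup>2)\<^sup>2" by (simp add: power2_eq_square algebra_simps)
    have "c\<^sup>2 + s\<^sup>2 = ((1 - t\<^sup>2)\<^sup>2 + (2 * t)\<^sup>2) / (1 + t\<^sup>2)\<^sup>2"
      unfolding c_def s_def by (simp add: power_divide add_divide_distrib)
    also have "\<dots> = 1" unfolding e using p by simp
    finally have "c\<^sup>2 + s\<^sup>2 = 1" .
    then have "(c - 1) * x + s * y \<le> 0" by (rule H)
    moreover have "(c - 1) * x + s * y = 2 * (- (t\<^sup>2 * x) + t * y) / (1 + t\<^sup>2)"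
    proof -
      have c1: "c - 1 = - (2 * t\<^sup>2) / (1 + t\<^sup>2)" unfolding c_def using p by (simp add: field_simps)
      have "- (2 * t\<^sup>2) / (1 + t\<^sup>2) * x + 2 * t / (1 + t\<^sup>2) * y = (- (2 * t\<^sup>2) * x + 2 * t * y) / (1 + t\<^sup>2)"
        by (simp add: add_divide_distrib diff_divide_distrib)
      then show ?thesis unfolding c1 s_def by (simp add: algebra_simps)
    qed
    ultimately show ?thesis using p by (simp add: divide_le_0_iff)
  qed
  define t where "t = y / (\<bar>x\<bar> + 1)"
  have p: "0 < \<bar>x\<bar> + 1" by simp
  have "t * y = y\<^sup>2 / (\<bar>x\<bar> + 1)" unfolding t_def by (simp add: power2_eq_square)
  moreover have "t\<^sup>2 * x \<le> y\<^sup>2 * \<bar>x\<bar> / (\<bar>x\<bar> + 1)\<^sup>2"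
    unfolding t_def by (simp add: power_divide mult_left_mono divide_right_mono)
  moreover have "y\<^sup>2 * \<bar>x\<bar> / (\<bar>x\<bar> + 1)\<^sup>2 < y\<^sup>2 / (\<bar>x\<bar> + 1)"
  proof -
    have q: "\<bar>x\<bar> / (\<bar>x\<bar> + 1) < 1" using p by simp
    have r: "0 < y\<^sup>2 / (\<bar>x\<bar> + 1)" using y p by simp
    have "y\<^sup>2 * \<bar>x\<bar> / (\<bar>x\<bar> + 1)\<^sup>2 = y\<^sup>2 / (\<bar>x\<bar> + 1) * (\<bar>x\<bar> / (\<bar>x\<bar> + 1))"
      by (simp add: power2_eq_square)
    also have "\<dots> < y\<^sup>2 / (\<bar>x\<bar> + 1) * 1" using q r by (intro mult_strict_left_mono) auto
    finally show ?thesis by simp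
  qed
  ultimately show False using main[of t] by linarith
qed

lemma gram2:
  assumes Y: "Y \<in> stiefel d K" and idx: "a < K" "b < K" "c < K" "e < K"
  shows "(\<Sum>r<d. (x1 * Y $$ (r,a) + x2 * Y $$ (r,b)) * (z1 * Y $$ (r,c) + z2 * Y $$ (r,e)))
       = x1 * z1 * (if a = c then 1 else 0) + x1 * z2 * (if a = e then 1 else 0)
         + x2 * z1 * (if b = c then 1 else 0) + x2 * z2 * (if b = e then 1 else 0)"
proof -
  have "(\<Sum>r<d. (x1 * Y $$ (r,a) + x2 * Y $$ (r,b)) * (z1 * Y $$ (r,c) + z2 * Y $$ (r,e)))
     = x1 * z1 * (\<Sum>r<d. Y $$ (r,a) * Y $$ (r,c)) + x1 * z2 * (\<Sum>r<d. Y $$ (r,a) * Y $$ (r,e))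
       + x2 * z1 * (\<Sum>r<d. Y $$ (r,b) * Y $$ (r,c)) + x2 * z2 * (\<Sum>r<d. Y $$ (r,b) * Y $$ (r,e))"
    by (simp add: algebra_simps sum.distrib sum_distrib_left)
  then show ?thesis using stiefel_gram[OF Y] idx by simp
qed

lemma sum_two:
  fixes g :: "nat \<Rightarrow> real"
  assumes "i \<noteq> j" "i < K" "j < K" "\<And>m. m < K \<Longrightarrow> m \<noteq> i \<Longrightarrow> m \<noteq> j \<Longrightarrow> g m = 0"
  shows "(\<Sum>m<K. g m) = g i + g j"
proof -
  have "sum g {..<K} = sum g {i,j}"
    by (rule sum.mono_neutral_right) (use assms in auto)
  then show ?thesis using assms by simp
qed

lemma sum_one:
  fixes g :: "nat \<Rightarrow> real"
  assumes "i < K" "\<And>m. m < K \<Longrightarrow> m \<noteq> i \<Longrightarrow> g m = 0"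
  shows "(\<Sum>m<K. g m) = g i"
proof -
  have "sum g {..<K} = sum g {i}"
    by (rule sum.mono_neutral_right) (use assms in auto)
  then show ?thesis using assms by simp
qed

definition hh :: "nat \<Rightarrow> real mat \<Rightarrow> real mat \<Rightarrow> nat \<Rightarrow> nat \<Rightarrow> real" where
  "hh d Y A k l = (\<Sum>r<d. Y $$ (r,k) * A $$ (r,l))"

lemma ip_hh: "ip d K Y A = (\<Sum>m<K. hh d Y A m m)"
  unfolding ip_def hh_def by (rule sum.swap)

lemma polar_sym:
  assumes Y: "Y \<in> stiefel d K" and A: "A \<in> carrier_mat d K"
    and opt: "\<And>W. W \<in> stiefel d K \<Longrightarrow> ip d K W A \<le> ip d K Y A"
    and ij: "i < K" "j < K"
  shows "hh d Y A i j = hh d Y A j i"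
proof (cases "i = j")
  case True then show ?thesis by simp
next
  case False
  note ne = False
  let ?H = "hh d Y A"
  have "(c - 1) * (?H i i + ?H j j) + s * (?H i j - ?H j i) \<le> 0" if cs: "c\<^sup>2 + s\<^sup>2 = 1" for c s
  proof -
    define x1 where "x1 = (\<lambda>m. if m = i then c else if m = j then s else 1)"
    define x2 where "x2 = (\<lambda>m. if m = i then - s else if m = j then c else 0)"
    define ia where "ia = (\<lambda>m::nat. if m = i \<or> m = j then i else m)"
    define ib where "ib = (\<lambda>m::nat. if m = i \<or> m = j then j else m)"
    have iab: "ia m < K" "ib m < K" if "m < K" for m using that ij unfolding ia_def ib_def by auto
    define W where "W = mat d K (\<lambda>(r,m). x1 m * Y $$ (r, ia m) + x2 m * Y $$ (r, ib m))"
    have Wc: "W \<in> carrier_mat d K" unfolding W_def by simp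
    have Wst: "W \<in> stiefel d K"
    proof (rule stiefelI[OF Wc])
      fix m n assume mn: "m < K" "n < K"
      have "(\<Sum>r<d. W $$ (r,m) * W $$ (r,n))
         = (\<Sum>r<d. (x1 m * Y $$ (r, ia m) + x2 m * Y $$ (r, ib m)) * (x1 n * Y $$ (r, ia n) + x2 n * Y $$ (r, ib n)))"
        unfolding W_def using mn by (intro sum.cong refl) simp
      also have "\<dots> = (if m = n then 1 else 0)"
        unfolding gram2[OF Y iab[OF mn(1)] iab[OF mn(2)]]
        using cs ne unfolding x1_def x2_def ia_def ib_def
        by (auto simp: power2_eq_square algebra_simps)
      finally show "(\<Sum>r<d. W $$ (r,m) * W $$ (r,n)) = (if m = n then 1 else 0)" .
    qed
    have "ip d K W A = (\<Sum>m<K. x1 m * ?H (ia m) m + x2 m * ?H (ib m) m)"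
    proof -
      have "ip d K W A = (\<Sum>m<K. \<Sum>r<d. W $$ (r,m) * A $$ (r,m))"
        unfolding ip_def by (rule sum.swap)
      also have "\<dots> = (\<Sum>m<K. \<Sum>r<d. x1 m * (Y $$ (r, ia m) * A $$ (r,m)) + x2 m * (Y $$ (r, ib m) * A $$ (r,m)))"
        unfolding W_def by (intro sum.cong refl) (simp add: algebra_simps)
      also have "\<dots> = (\<Sum>m<K. x1 m * ?H (ia m) m + x2 m * ?H (ib m) m)"
        unfolding hh_def by (simp add: sum.distrib sum_distrib_left)
      finally show ?thesis .
    qed
    then have "ip d K W A - ip d K Y A = (\<Sum>m<K. x1 m * ?H (ia m) m + x2 m * ?H (ib m) m - ?H m m)"
      by (simp add: ip_hh sum_subtractf)
    also have "\<dots> = (c - 1) * (?H i i + ?H j j) + s * (?H i j - ?H j i)"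
      using ne by (subst sum_two[OF ne ij]) (auto simp: x1_def x2_def ia_def ib_def algebra_simps)
    finally show ?thesis using opt[OF Wst] by simp
  qed
  then have "?H i j - ?H j i = 0" by (rule angle_zero)
  then show ?thesis by simp
qed

lemma polar_perp:
  assumes Y: "Y \<in> stiefel d K" and A: "A \<in> carrier_mat d K"
    and opt: "\<And>W. W \<in> stiefel d K \<Longrightarrow> ip d K W A \<le> ip d K Y A"
    and i: "i < K"
    and qn: "(\<Sum>r<d. (q r)\<^sup>2) = 1" and qY: "\<And>k. k < K \<Longrightarrow> (\<Sum>r<d. q r * Y $$ (r,k)) = 0"
  shows "(\<Sum>r<d. q r * A $$ (r,i)) = 0"
proof -
  let ?H = "hh d Y A"
  have "(c - 1) * ?H i i + s * (\<Sum>r<d. q r * A $$ (r,i)) \<le> 0" if cs: "c\<^sup>2 + s\<^sup>2 = 1" for c s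
  proof -
    define W where "W = mat d K (\<lambda>(r,m). if m = i then c * Y $$ (r,i) + s * q r else Y $$ (r,m))"
    have Wc: "W \<in> carrier_mat d K" unfolding W_def by simp
    have mix: "(\<Sum>r<d. (c * Y $$ (r,i) + s * q r) * Y $$ (r,n)) = c * (if i = n then 1 else 0)" if n: "n < K" for n
    proof -
      have "(\<Sum>r<d. (c * Y $$ (r,i) + s * q r) * Y $$ (r,n)) = c * (\<Sum>r<d. Y $$ (r,i) * Y $$ (r,n)) + s * (\<Sum>r<d. q r * Y $$ (r,n))"
        by (simp add: algebra_simps sum.distrib sum_distrib_left)
      then show ?thesis using stiefel_gram[OF Y i n] qY[OF n] by simp
    qed
    have self: "(\<Sum>r<d. (c * Y $$ (r,i) + s * q r) * (c * Y $$ (r,i) + s * q r)) = 1"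
    proof -
      have "(\<Sum>r<d. (c * Y $$ (r,i) + s * q r) * (c * Y $$ (r,i) + s * q r))
          = c * (\<Sum>r<d. (c * Y $$ (r,i) + s * q r) * Y $$ (r,i)) + s * (c * (\<Sum>r<d. q r * Y $$ (r,i)) + s * (\<Sum>r<d. (q r)\<^sup>2))"
        by (simp add: algebra_simps sum.distrib sum_distrib_left power2_eq_square)
      then show ?thesis using mix[OF i] qY[OF i] qn cs by (simp add: power2_eq_square)
    qed
    have Wst: "W \<in> stiefel d K"
    proof (rule stiefelI[OF Wc])
      fix m n assume mn: "m < K" "n < K"
      have "(\<Sum>r<d. W $$ (r,m) * W $$ (r,n))
        = (\<Sum>r<d. (if m = i then c * Y $$ (r,i) + s * q r else Y $$ (r,m)) * (if n = i then c * Y $$ (r,i) + s * q r else Y $$ (r,n)))"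
        unfolding W_def using mn by (intro sum.cong refl) simp
      also have "\<dots> = (if m = n then 1 else 0)"
      proof (cases "m = i")
        case True
        then show ?thesis using self mix[OF mn(2)] by auto
      next
        case False
        then show ?thesis using mix[OF mn(1)] stiefel_gram[OF Y mn]
          by (cases "n = i") (auto simp: mult.commute)
      qed
      finally show "(\<Sum>r<d. W $$ (r,m) * W $$ (r,n)) = (if m = n then 1 else 0)" .
    qed
    have "ip d K W A - ip d K Y A = (\<Sum>m<K. (\<Sum>r<d. W $$ (r,m) * A $$ (r,m)) - ?H m m)"
      unfolding ip_hh unfolding ip_def hh_def by (simp add: sum_subtractf sum.swap[of _ "{..<d}"])
    also have "\<dots> = (\<Sum>r<d. W $$ (r,i) * A $$ (r,i)) - ?H i i"
      by (rule sum_one[OF i]) (auto simp: W_def hh_def)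
    also have "\<dots> = (c - 1) * ?H i i + s * (\<Sum>r<d. q r * A $$ (r,i))"
    proof -
      have "(\<Sum>r<d. W $$ (r,i) * A $$ (r,i)) = c * ?H i i + s * (\<Sum>r<d. q r * A $$ (r,i))"
        unfolding W_def hh_def using i by (simp add: algebra_simps sum.distrib sum_distrib_left)
      then show ?thesis by (simp add: algebra_simps)
    qed
    finally show ?thesis using opt[OF Wst] by simp
  qed
  then show ?thesis by (rule angle_zero)
qed

lemma polar_range:
  assumes Y: "Y \<in> stiefel d K" and A: "A \<in> carrier_mat d K"
    and opt: "\<And>W. W \<in> stiefel d K \<Longrightarrow> ip d K W A \<le> ip d K Y A"
    and i: "i < K" and r0: "r0 < d"
  shows "A $$ (r0,i) = (\<Sum>k<K. Y $$ (r0,k) * hh d Y A k i)"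
proof -
  define z where "z = (\<lambda>r. A $$ (r,i) - (\<Sum>k<K. Y $$ (r,k) * hh d Y A k i))"
  have zY: "(\<Sum>r<d. z r * Y $$ (r,k)) = 0" if k: "k < K" for k
  proof -
    have e1: "(\<Sum>r<d. z r * Y $$ (r,k)) = (\<Sum>r<d. Y $$ (r,k) * A $$ (r,i)) - (\<Sum>r<d. \<Sum>l<K. hh d Y A l i * (Y $$ (r,l) * Y $$ (r,k)))"
    proof -
      have "(\<Sum>r<d. z r * Y $$ (r,k)) = (\<Sum>r<d. Y $$ (r,k) * A $$ (r,i) - (\<Sum>l<K. hh d Y A l i * (Y $$ (r,l) * Y $$ (r,k))))"
        by (intro sum.cong refl) (simp add: z_def left_diff_distrib right_diff_distrib sum_distrib_left sum_distrib_right mult_ac)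
      then show ?thesis by (simp add: sum_subtractf)
    qed
    have e2: "(\<Sum>r<d. \<Sum>l<K. hh d Y A l i * (Y $$ (r,l) * Y $$ (r,k))) = (\<Sum>l<K. hh d Y A l i * (\<Sum>r<d. Y $$ (r,l) * Y $$ (r,k)))"
      by (subst sum.swap) (simp add: sum_distrib_left)
    have "(\<Sum>r<d. z r * Y $$ (r,k)) = hh d Y A k i - (\<Sum>l<K. hh d Y A l i * (\<Sum>r<d. Y $$ (r,l) * Y $$ (r,k)))"
      unfolding e1 e2 by (simp add: hh_def mult.commute)
    also have "\<dots> = hh d Y A k i - (\<Sum>l<K. hh d Y A l i * (if l = k then 1 else 0))"
      using stiefel_gram[OF Y] k by simp
    also have "\<dots> = 0" using k by (simp add: if_distrib cong: if_cong)
    finally show ?thesis .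
  qed
  define nz where "nz = (\<Sum>r<d. (z r)\<^sup>2)"
  have nz_eq: "nz = (\<Sum>r<d. z r * A $$ (r,i))"
  proof -
    have "nz = (\<Sum>r<d. z r * A $$ (r,i)) - (\<Sum>r<d. \<Sum>k<K. hh d Y A k i * (z r * Y $$ (r,k)))"
      unfolding nz_def power2_eq_square
      by (subst (2) z_def) (simp add: right_diff_distrib sum_subtractf sum_distrib_left mult_ac)
    also have "(\<Sum>r<d. \<Sum>k<K. hh d Y A k i * (z r * Y $$ (r,k))) = (\<Sum>k<K. hh d Y A k i * (\<Sum>r<d. z r * Y $$ (r,k)))"
      by (subst sum.swap) (simp add: sum_distrib_left)
    finally have "nz = (\<Sum>r<d. z r * A $$ (r,i)) - (\<Sum>k<K. hh d Y A k i * (\<Sum>r<d. z r * Y $$ (r,k)))" .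
    then show ?thesis using zY by simp
  qed
  have "nz = 0"
  proof (rule ccontr)
    assume "nz \<noteq> 0"
    moreover have "0 \<le> nz" unfolding nz_def by (intro sum_nonneg) auto
    ultimately have np: "0 < nz" by simp
    define q where "q = (\<lambda>r. z r / sqrt nz)"
    have "(\<Sum>r<d. (q r)\<^sup>2) = nz / nz"
      unfolding q_def nz_def by (simp add: power_divide sum_divide_distrib[symmetric] sum_nonneg)
    then have qn: "(\<Sum>r<d. (q r)\<^sup>2) = 1" using np by simp
    have qY: "(\<Sum>r<d. q r * Y $$ (r,k)) = 0" if "k < K" for k
      using zY[OF that] unfolding q_def by (simp add: sum_divide_distrib[symmetric])
    have "(\<Sum>r<d. q r * A $$ (r,i)) = 0" by (rule polar_perp[OF Y A opt i qn qY])
    then have "(\<Sum>r<d. z r * A $$ (r,i)) / sqrt nz = 0"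
      unfolding q_def by (simp add: sum_divide_distrib[symmetric])
    then have "nz = 0" using np nz_eq by simp
    then show False using np by simp
  qed
  then have "\<forall>r\<in>{..<d}. (z r)\<^sup>2 = 0" unfolding nz_def by (subst sum_nonneg_eq_0_iff[symmetric]) auto
  then show ?thesis using r0 unfolding z_def by simp
qed

lemma polar_psd_unit:
  assumes Y: "Y \<in> stiefel d K" and A: "A \<in> carrier_mat d K"
    and opt: "\<And>W. W \<in> stiefel d K \<Longrightarrow> ip d K W A \<le> ip d K Y A"
    and un: "(\<Sum>p<K. (u p)\<^sup>2) = 1"
  shows "0 \<le> (\<Sum>m<K. u m * (\<Sum>p<K. u p * hh d Y A p m))"
proof -
  define v where "v = (\<lambda>r. \<Sum>p<K. u p * Y $$ (r,p))"
  have Yv: "(\<Sum>r<d. Y $$ (r,m) * v r) = u m" if m: "m < K" for m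
  proof -
    have "(\<Sum>r<d. Y $$ (r,m) * v r) = (\<Sum>r<d. \<Sum>p<K. u p * (Y $$ (r,p) * Y $$ (r,m)))"
      unfolding v_def by (simp add: sum_distrib_left mult_ac)
    also have "\<dots> = (\<Sum>p<K. u p * (\<Sum>r<d. Y $$ (r,p) * Y $$ (r,m)))"
      by (subst sum.swap) (simp add: sum_distrib_left)
    also have "\<dots> = (\<Sum>p<K. u p * (if p = m then 1 else 0))"
      using stiefel_gram[OF Y] m by simp
    also have "\<dots> = u m" using m by (simp add: if_distrib cong: if_cong)
    finally show ?thesis .
  qed
  have vv: "(\<Sum>r<d. v r * v r) = 1"
  proof -
    have "(\<Sum>r<d. v r * v r) = (\<Sum>r<d. \<Sum>p<K. u p * (Y $$ (r,p) * v r))"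
      by (subst (1) v_def) (simp add: sum_distrib_right sum_distrib_left mult_ac)
    also have "\<dots> = (\<Sum>p<K. u p * (\<Sum>r<d. Y $$ (r,p) * v r))"
      by (subst sum.swap) (simp add: sum_distrib_left)
    also have "\<dots> = (\<Sum>p<K. u p * u p)" using Yv by simp
    finally show ?thesis using un by (simp add: power2_eq_square)
  qed
  define W where "W = mat d K (\<lambda>(r,m). Y $$ (r,m) - 2 * u m * v r)"
  have Wc: "W \<in> carrier_mat d K" unfolding W_def by simp
  have Wst: "W \<in> stiefel d K"
  proof (rule stiefelI[OF Wc])
    fix m n assume mn: "m < K" "n < K"
    have "(\<Sum>r<d. W $$ (r,m) * W $$ (r,n)) = (\<Sum>r<d. (Y $$ (r,m) - 2 * u m * v r) * (Y $$ (r,n) - 2 * u n * v r))"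
      unfolding W_def using mn by (intro sum.cong refl) simp
    also have "\<dots> = (\<Sum>r<d. Y $$ (r,m) * Y $$ (r,n)) - 2 * u n * (\<Sum>r<d. Y $$ (r,m) * v r)
        - 2 * u m * (\<Sum>r<d. Y $$ (r,n) * v r) + 4 * u m * u n * (\<Sum>r<d. v r * v r)"
      by (simp add: algebra_simps sum.distrib sum_subtractf sum_distrib_left)
    also have "\<dots> = (if m = n then 1 else 0)"
      using stiefel_gram[OF Y mn] Yv[OF mn(1)] Yv[OF mn(2)] vv by simp
    finally show "(\<Sum>r<d. W $$ (r,m) * W $$ (r,n)) = (if m = n then 1 else 0)" .
  qed
  have vA: "(\<Sum>r<d. v r * A $$ (r,m)) = (\<Sum>p<K. u p * hh d Y A p m)" for m
  proof -
    have "(\<Sum>r<d. v r * A $$ (r,m)) = (\<Sum>r<d. \<Sum>p<K. u p * (Y $$ (r,p) * A $$ (r,m)))"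
      unfolding v_def by (simp add: sum_distrib_right sum_distrib_left mult_ac)
    also have "\<dots> = (\<Sum>p<K. u p * hh d Y A p m)"
      unfolding hh_def by (subst sum.swap) (simp add: sum_distrib_left)
    finally show ?thesis .
  qed
  have "ip d K W A = (\<Sum>m<K. \<Sum>r<d. W $$ (r,m) * A $$ (r,m))"
    unfolding ip_def by (rule sum.swap)
  also have "\<dots> = (\<Sum>m<K. \<Sum>r<d. Y $$ (r,m) * A $$ (r,m) - 2 * u m * (v r * A $$ (r,m)))"
    unfolding W_def by (intro sum.cong refl) (simp add: algebra_simps)
  also have "\<dots> = ip d K Y A - 2 * (\<Sum>m<K. u m * (\<Sum>p<K. u p * hh d Y A p m))"
    unfolding ip_hh vA[symmetric] by (simp add: sum_subtractf sum_distrib_left hh_def mult_ac)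
  finally show ?thesis using opt[OF Wst] by simp
qed

lemma polar_psd:
  assumes Y: "Y \<in> stiefel d K" and A: "A \<in> carrier_mat d K"
    and opt: "\<And>W. W \<in> stiefel d K \<Longrightarrow> ip d K W A \<le> ip d K Y A"
  shows "0 \<le> (\<Sum>p<K. f p * (\<Sum>m<K. hh d Y A p m * f m))"
proof -
  define S where "S = (\<Sum>p<K. (f p)\<^sup>2)"
  have S0: "0 \<le> S" unfolding S_def by (intro sum_nonneg) auto
  have eq: "(\<Sum>p<K. f p * (\<Sum>m<K. hh d Y A p m * f m)) = (\<Sum>m<K. f m * (\<Sum>p<K. f p * hh d Y A p m))"
  proof -
    have "(\<Sum>p<K. f p * (\<Sum>m<K. hh d Y A p m * f m)) = (\<Sum>p<K. \<Sum>m<K. f p * hh d Y A p m * f m)"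
      by (simp add: sum_distrib_left mult_ac)
    also have "\<dots> = (\<Sum>m<K. \<Sum>p<K. f p * hh d Y A p m * f m)" by (rule sum.swap)
    also have "\<dots> = (\<Sum>m<K. f m * (\<Sum>p<K. f p * hh d Y A p m))" by (simp add: sum_distrib_left mult_ac)
    finally show ?thesis .
  qed
  show ?thesis
  proof (cases "S = 0")
    case True
    then have "\<forall>p\<in>{..<K}. (f p)\<^sup>2 = 0" unfolding S_def by (subst sum_nonneg_eq_0_iff[symmetric]) auto
    then show ?thesis by simp
  next
    case False
    then have Sp: "0 < S" using S0 by simp
    define u where "u = (\<lambda>p. f p / sqrt S)"
    have "(\<Sum>p<K. (u p)\<^sup>2) = S / S"
      unfolding u_def S_def by (simp add: power_divide sum_divide_distrib[symmetric] sum_nonneg)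
    then have un: "(\<Sum>p<K. (u p)\<^sup>2) = 1" using Sp by simp
    have "0 \<le> (\<Sum>m<K. u m * (\<Sum>p<K. u p * hh d Y A p m))" by (rule polar_psd_unit[OF Y A opt un])
    also have "(\<Sum>m<K. u m * (\<Sum>p<K. u p * hh d Y A p m)) = (\<Sum>m<K. f m * (\<Sum>p<K. f p * hh d Y A p m)) / S"
      unfolding u_def using Sp
      by (simp add: sum_divide_distrib[symmetric] sum_distrib_left[symmetric] field_simps)
    finally show ?thesis unfolding eq using Sp by (simp add: zero_le_divide_iff)
  qed
qed



lemma frob_minus_comm:
  assumes "X \<in> carrier_mat d K" "Y \<in> carrier_mat d K"
  shows "frob_norm (X - Y) = frob_norm (Y - X)"
proof -
  have "(frob_norm (X - Y))\<^sup>2 = (frob_norm (Y - X))\<^sup>2"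
    using assms by (simp add: frob_sq_gen power2_commute)
  then show ?thesis using frob_nonneg power2_eq_iff_nonneg by blast
qed

lemma part_c:
  assumes Qc: "Q \<in> carrier_mat d K" and X: "X \<in> stiefel d K"
    and Y: "Y \<in> P_St d K (A_alpha K Q lam a \<alpha> X)"
  shows "rho_alpha K Q lam a \<alpha> X \<le> frob_norm (A_alpha K Q lam a \<alpha> X) * frob_norm (Y - X)"
proof -
  define A where "A = A_alpha K Q lam a \<alpha> X"
  have Xc: "X \<in> carrier_mat d K" using X by (simp add: stiefel_def)
  have Ac: "A \<in> carrier_mat d K" unfolding A_def by (rule A_carrier[OF Qc Xc])
  have Yst: "Y \<in> stiefel d K" using Y by (simp add: P_St_def)
  have Yc: "Y \<in> carrier_mat d K" using Yst by (simp add: stiefel_def)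
  have opt: "\<And>W. W \<in> stiefel d K \<Longrightarrow> ip d K W A \<le> ip d K Y A"
    using P_St_opt[OF Y[folded A_def] Ac] by blast
  define H where "H = transpose_mat Y * A"
  have Hc: "H \<in> carrier_mat K K" unfolding H_def using Yc Ac by auto
  have He: "H $$ (k,l) = hh d Y A k l" if "k < K" "l < K" for k l
    unfolding H_def hh_def using that Yc Ac by (subst mult_entry) auto
  have Hpsd: "psd_mat K H"
  proof (rule psd_mat_intro[OF Hc])
    show "H $$ (i,j) = H $$ (j,i)" if "i < K" "j < K" for i j
      using He that polar_sym[OF Yst Ac opt that] by simp
    show "0 \<le> (\<Sum>i<K. f i * (\<Sum>j<K. H $$ (i,j) * f j))" for f
      using polar_psd[OF Yst Ac opt, of f] He by simp
  qed
  have HT: "transpose_mat H = H"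
    using Hpsd by (simp add: psd_mat_def)
  have AYH: "A = Y * H"
  proof (rule eq_matI)
    fix r i assume ri: "r < dim_row (Y * H)" "i < dim_col (Y * H)"
    then have ri': "r < d" "i < K" using Yc Hc by auto
    have "(Y * H) $$ (r,i) = (\<Sum>k<K. Y $$ (r,k) * H $$ (k,i))"
      using ri' Yc Hc by (subst mult_entry) auto
    also have "\<dots> = (\<Sum>k<K. Y $$ (r,k) * hh d Y A k i)"
      using He ri' by simp
    finally show "A $$ (r,i) = (Y * H) $$ (r,i)"
      using polar_range[OF Yst Ac opt ri'(2) ri'(1)] by simp
  qed (use Ac Yc Hc in auto)
  have YY: "transpose_mat Y * Y = 1\<^sub>m K" using Yst by (simp add: stiefel_def)
  have HH: "H * H = transpose_mat A * A"
  proof -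
    have "transpose_mat A * A = (transpose_mat H * transpose_mat Y) * (Y * H)"
      unfolding AYH using transpose_mult[OF Yc Hc] by simp
    also have "\<dots> = transpose_mat H * (transpose_mat Y * (Y * H))"
      using Yc Hc by (subst assoc_mult_mat[of _ K K _ d]) auto
    also have "transpose_mat Y * (Y * H) = (transpose_mat Y * Y) * H"
      using Yc Hc by (subst assoc_mult_mat[of _ K d _ K]) auto
    also have "\<dots> = H" unfolding YY using Hc by simp
    finally show ?thesis unfolding HT by simp
  qed
  have sq: "psd_sqrt K (transpose_mat A * A) = H"
    by (rule psd_sqrt_eq[OF Hpsd HH])
  have rho: "rho_alpha K Q lam a \<alpha> X = frob_norm ((X - Y) * H)"
  proof -
    have "rho_alpha K Q lam a \<alpha> X = frob_norm (X * H - A)"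
      unfolding rho_alpha_def Let_def A_def[symmetric] sq ..
    also have "X * H - A = (X - Y) * H"
      unfolding AYH using Xc Yc Hc by (simp add: minus_mult_distrib_mat[of _ d K])
    finally show ?thesis .
  qed
  have fH: "frob_norm H = frob_norm A"
  proof -
    have "(frob_norm H)\<^sup>2 = (\<Sum>k<K. \<Sum>l<K. (H $$ (k,l))\<^sup>2)"
      unfolding frob_sq_gen using Hc by simp
    also have "\<dots> = (\<Sum>l<K. \<Sum>k<K. (H $$ (k,l))\<^sup>2)" by (rule sum.swap)
    also have "\<dots> = (\<Sum>l<K. (H * H) $$ (l,l))"
    proof (intro sum.cong refl)
      fix l assume l: "l \<in> {..<K}"
      have "(H * H) $$ (l,l) = (\<Sum>k<K. H $$ (l,k) * H $$ (k,l))"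
        using l Hc by (subst mult_entry) auto
      also have "\<dots> = (\<Sum>k<K. (H $$ (k,l))\<^sup>2)"
        using l Hpsd psd_mat_entry(2)[OF Hpsd] by (intro sum.cong refl) (auto simp: power2_eq_square)
      finally show "(\<Sum>k<K. (H $$ (k,l))\<^sup>2) = (H * H) $$ (l,l)" by simp
    qed
    also have "\<dots> = (\<Sum>l<K. \<Sum>r<d. (A $$ (r,l))\<^sup>2)"
    proof (intro sum.cong refl)
      fix l assume l: "l \<in> {..<K}"
      show "(H * H) $$ (l,l) = (\<Sum>r<d. (A $$ (r,l))\<^sup>2)"
        unfolding HH using l Ac by (subst mult_entry) (auto simp: power2_eq_square)
    qed
    also have "\<dots> = (\<Sum>r<d. \<Sum>l<K. (A $$ (r,l))\<^sup>2)" by (rule sum.swap)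
    also have "\<dots> = (frob_norm A)\<^sup>2"
      unfolding frob_sq_gen using Ac by simp
    finally show ?thesis using frob_nonneg power2_eq_iff_nonneg by blast
  qed
  have "frob_norm ((X - Y) * H) \<le> frob_norm (X - Y) * frob_norm H"
    by (rule frob_mult) (use Xc Yc Hc in auto)
  then show ?thesis
    unfolding rho fH A_def[symmetric] frob_minus_comm[OF Xc Yc] by (simp add: mult.commute)
qed

lemma frob_A_bound:
  assumes Qc: "Q \<in> carrier_mat d K" and X: "X \<in> stiefel d K"
  shows "frob_norm (A_alpha K Q lam a \<alpha> X) \<le>
    sqrt (2 * \<alpha>\<^sup>2 * real K + 2 * (frob_norm Q * frob_norm (diagm K lam) * frob_norm (transpose_mat Q) * frob_norm (diagm K a))\<^sup>2 * real K)"
proof -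
  have Xc: "X \<in> carrier_mat d K" using X by (simp add: stiefel_def)
  define N where "N = Q * diagm K lam * transpose_mat Q * X * diagm K a"
  define c where "c = frob_norm Q * frob_norm (diagm K lam) * frob_norm (transpose_mat Q) * frob_norm (diagm K a)"
  have Nc: "N \<in> carrier_mat d K" unfolding N_def using Qc Xc by auto
  have fX: "frob_norm X = sqrt (real K)"
    using frob_sq[OF Xc] ip_self_stiefel[OF X] frob_nonneg by (metis real_sqrt_unique)
  have "frob_norm N \<le> frob_norm (Q * diagm K lam * transpose_mat Q * X) * frob_norm (diagm K a)"
    unfolding N_def by (rule frob_mult) (use Qc Xc in simp)
  also have "\<dots> \<le> (frob_norm (Q * diagm K lam * transpose_mat Q) * frob_norm X) * frob_norm (diagm K a)"
    by (intro mult_right_mono frob_mult frob_nonneg) (use Qc Xc in simp)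
  also have "\<dots> \<le> ((frob_norm (Q * diagm K lam) * frob_norm (transpose_mat Q)) * frob_norm X) * frob_norm (diagm K a)"
    by (intro mult_right_mono frob_mult frob_nonneg) (use Qc Xc in simp_all)
  also have "\<dots> \<le> (((frob_norm Q * frob_norm (diagm K lam)) * frob_norm (transpose_mat Q)) * frob_norm X) * frob_norm (diagm K a)"
    by (intro mult_right_mono frob_mult frob_nonneg) (use Qc Xc in simp_all)
  also have "\<dots> = c * sqrt (real K)" unfolding c_def fX by (simp add: mult_ac)
  finally have fN: "frob_norm N \<le> c * sqrt (real K)" .
  have c0: "0 \<le> c" unfolding c_def by (intro mult_nonneg_nonneg frob_nonneg)
  have AXN: "\<alpha> \<cdot>\<^sub>m X + N \<in> carrier_mat d K" using Xc Nc by auto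
  have "(frob_norm (A_alpha K Q lam a \<alpha> X))\<^sup>2 = (\<Sum>i<d. \<Sum>k<K. (\<alpha> * X $$ (i,k) + N $$ (i,k))\<^sup>2)"
    unfolding A_alpha_def N_def[symmetric] frob_sq[OF AXN] ip_def
    using Xc Nc by (intro sum.cong refl) (simp add: power2_eq_square)
  also have "\<dots> \<le> (\<Sum>i<d. \<Sum>k<K. 2 * \<alpha>\<^sup>2 * (X $$ (i,k) * X $$ (i,k)) + 2 * (N $$ (i,k) * N $$ (i,k)))"
  proof (intro sum_mono)
    fix i k
    have "0 \<le> (\<alpha> * X $$ (i,k) - N $$ (i,k))\<^sup>2" by simp
    then show "(\<alpha> * X $$ (i,k) + N $$ (i,k))\<^sup>2 \<le> 2 * \<alpha>\<^sup>2 * (X $$ (i,k) * X $$ (i,k)) + 2 * (N $$ (i,k) * N $$ (i,k))"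
      by (simp add: power2_eq_square algebra_simps)
  qed
  also have "\<dots> = 2 * \<alpha>\<^sup>2 * ip d K X X + 2 * ip d K N N"
    unfolding ip_def by (simp add: sum.distrib sum_distrib_left)
  also have "\<dots> = 2 * \<alpha>\<^sup>2 * real K + 2 * (frob_norm N)\<^sup>2"
    using ip_self_stiefel[OF X] frob_sq[OF Nc] by simp
  also have "\<dots> \<le> 2 * \<alpha>\<^sup>2 * real K + 2 * (c * sqrt (real K))\<^sup>2"
    using fN frob_nonneg[of N] by (simp add: power_mono)
  also have "\<dots> = 2 * \<alpha>\<^sup>2 * real K + 2 * c\<^sup>2 * real K"
    by (simp add: power_mult_distrib)
  finally have "(frob_norm (A_alpha K Q lam a \<alpha> X))\<^sup>2 \<le> 2 * \<alpha>\<^sup>2 * real K + 2 * c\<^sup>2 * real K" .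
  then show ?thesis unfolding c_def[symmetric] using frob_nonneg by (simp add: real_le_rsqrt)
qed

theorem proposition1:
  fixes d K :: nat and Q :: "real mat" and lam a :: "nat \<Rightarrow> real"
  assumes "1 \<le> K" and "K < d"
    and "Q \<in> stiefel d K"
    and "\<And>i j. i < j \<Longrightarrow> j < K \<Longrightarrow> lam j < lam i"
    and "\<And>i. i < K \<Longrightarrow> lam i > 0"
    and "\<And>i j. i < j \<Longrightarrow> j < K \<Longrightarrow> a j < a i"
    and "\<And>i. i < K \<Longrightarrow> a i > 0"
  shows "\<forall>\<alpha>>0. \<exists>\<beta>3>0. \<exists>\<beta>4>0. \<forall>X :: nat \<Rightarrow> real mat.
           (X 0 \<in> stiefel d K \<and> (\<forall>t. X (Suc t) \<in> P_St d K (A_alpha K Q lam a \<alpha> (X t))))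
           \<longrightarrow> (\<forall>t.
                 gfun K Q lam a (X (Suc t)) - gfun K Q lam a (X t)
                   \<ge> \<alpha> * (frob_norm (X t - X (Suc t)))\<^sup>2
               \<and> gfun K Q lam a Q - gfun K Q lam a (X t) \<le> \<beta>3 * (dF K (X t) Q)\<^sup>2
               \<and> rho_alpha K Q lam a \<alpha> (X t) \<le> \<beta>4 * frob_norm (X (Suc t) - X t))"
proof (intro allI impI)
  fix \<alpha> :: real assume ap: "0 < \<alpha>"
  have Qst: "Q \<in> stiefel d K" using assms(3) .
  have Qc: "Q \<in> carrier_mat d K" using Qst by (simp add: stiefel_def)
  have lam0: "\<And>l. l < K \<Longrightarrow> lam l \<ge> 0" using assms(5) by (simp add: less_imp_le)
  have a0: "\<And>k. k < K \<Longrightarrow> a k \<ge> 0" using assms(7) by (simp add: less_imp_le)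
  define \<beta>3 where "\<beta>3 = (\<Sum>k<K. a k * lam k)"
  define c where "c = frob_norm Q * frob_norm (diagm K lam) * frob_norm (transpose_mat Q) * frob_norm (diagm K a)"
  define \<beta>4 where "\<beta>4 = sqrt (2 * \<alpha>\<^sup>2 * real K + 2 * c\<^sup>2 * real K)"
  have b3: "0 < \<beta>3" unfolding \<beta>3_def using assms(1,5,7)
    by (intro sum_pos) (auto simp: lessThan_empty_iff)
  have b4: "0 < \<beta>4" unfolding \<beta>4_def using ap assms(1)
    by (intro real_sqrt_gt_zero add_pos_nonneg) auto
  show "\<exists>\<beta>3>0. \<exists>\<beta>4>0. \<forall>X :: nat \<Rightarrow> real mat.
           (X 0 \<in> stiefel d K \<and> (\<forall>t. X (Suc t) \<in> P_St d K (A_alpha K Q lam a \<alpha> (X t))))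
           \<longrightarrow> (\<forall>t.
                 gfun K Q lam a (X (Suc t)) - gfun K Q lam a (X t)
                   \<ge> \<alpha> * (frob_norm (X t - X (Suc t)))\<^sup>2
               \<and> gfun K Q lam a Q - gfun K Q lam a (X t) \<le> \<beta>3 * (dF K (X t) Q)\<^sup>2
               \<and> rho_alpha K Q lam a \<alpha> (X t) \<le> \<beta>4 * frob_norm (X (Suc t) - X t))"
  proof (rule exI[of _ \<beta>3], rule conjI[OF b3], rule exI[of _ \<beta>4], rule conjI[OF b4], intro allI impI conjI)
    fix X :: "nat \<Rightarrow> real mat" and t :: nat
    assume H: "X 0 \<in> stiefel d K \<and> (\<forall>t. X (Suc t) \<in> P_St d K (A_alpha K Q lam a \<alpha> (X t)))"
    have Xst: "X n \<in> stiefel d K" for n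
      using H by (cases n) (auto simp: P_St_def)
    have Y: "X (Suc t) \<in> P_St d K (A_alpha K Q lam a \<alpha> (X t))" using H by blast
    have Xc: "X n \<in> carrier_mat d K" for n using Xst[of n] by (simp add: stiefel_def)
    show "gfun K Q lam a (X (Suc t)) - gfun K Q lam a (X t) \<ge> \<alpha> * (frob_norm (X t - X (Suc t)))\<^sup>2"
      by (rule part_a[OF Qc Xst Y lam0 a0])
    show "gfun K Q lam a Q - gfun K Q lam a (X t) \<le> \<beta>3 * (dF K (X t) Q)\<^sup>2"
      unfolding \<beta>3_def by (rule part_b[OF Qst Xst lam0 a0])
    have "rho_alpha K Q lam a \<alpha> (X t) \<le> frob_norm (A_alpha K Q lam a \<alpha> (X t)) * frob_norm (X (Suc t) - X t)"
      by (rule part_c[OF Qc Xst Y])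
    also have "\<dots> \<le> \<beta>4 * frob_norm (X (Suc t) - X t)"
      unfolding \<beta>4_def c_def by (intro mult_right_mono frob_A_bound[OF Qc Xst] frob_nonneg)
    finally show "rho_alpha K Q lam a \<alpha> (X t) \<le> \<beta>4 * frob_norm (X (Suc t) - X t)" .
  qed
qed


end
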